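(* If $0\le r\le b-1$ then $\mathrm{Var}(\mu^{(r)})=r(1+b-r)$.
   Context: Fix an integer $b\ge2$. For $n\in\mathbb{N}$ with base-$b$ digits $n_k$, $s(n):=\sum_kn_k$. For $r,n\in\mathbb{N}$, $\Delta^{(r)}(n):=s(n+r)-s(n)$, and $\mu^{(r)}(d):=\lim_{N\to\infty}\frac1N|\{n<N:\Delta^{(r)}(n)=d\}|$ for $d\in\mathbb{Z}$; these limits exist and $\mu^{(r)}$ is a probability measure on $\mathbb{Z}$ with finite moments. $\mathrm{Var}(\mu^{(r)})$ is its variance. *)

theory Defs
  imports "HOL-Analysis.Analysis"
begin

text \<open>Base-b digit sum: the n-th digit of n is (n div b^k) mod b; all digits of
  index k > n vanish when b \<ge> 2, so summing over k \<le> n covers all digits.\<close>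
definition digsum :: "nat \<Rightarrow> nat \<Rightarrow> nat" where
  "digsum b n = (\<Sum>k\<le>n. (n div b ^ k) mod b)"

definition Delta :: "nat \<Rightarrow> nat \<Rightarrow> nat \<Rightarrow> int" where
  "Delta b r n = int (digsum b (n + r)) - int (digsum b n)"

definition mu :: "nat \<Rightarrow> nat \<Rightarrow> int \<Rightarrow> real" where
  "mu b r d = lim (\<lambda>N. real (card {n. n < N \<and> Delta b r n = d}) / real N)"

definition mu_mean :: "nat \<Rightarrow> nat \<Rightarrow> real" where
  "mu_mean b r = (\<Sum>\<^sub>\<infinity>d\<in>(UNIV::int set). real_of_int d * mu b r d)"

definition mu_var :: "nat \<Rightarrow> nat \<Rightarrow> real" where
  "mu_var b r = (\<Sum>\<^sub>\<infinity>d\<in>(UNIV::int set). (real_of_int d - mu_mean b r)\<^sup>2 * mu b r d)"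

end

theory Submission imports Defs begin

lemma pow_gt: "(b::nat) \<ge> 2 \<Longrightarrow> k < b ^ k"
proof (induction k)
  case (Suc k) then show ?case
    by (metis One_nat_def Suc_le_eq Suc_lessI less_exp mult_0_right numeral_2_eq_2 power_gt_expt zero_less_Suc)
qed simp

lemma digsum_ext:
  assumes b: "b \<ge> 2" and "n \<le> M"
  shows "digsum b n = (\<Sum>k\<le>M. (n div b ^ k) mod b)"
  unfolding digsum_def
proof (rule sum.mono_neutral_left)
  show "\<forall>i\<in>{..M} - {..n}. n div b ^ i mod b = 0"
  proof
    fix i assume "i \<in> {..M} - {..n}"
    then have "n < i" by auto
    also have "i < b ^ i" using pow_gt b by blast
    finally show "n div b ^ i mod b = 0" by simp
  qed
qed (use assms in auto)

lemma digsum_rec: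
  assumes b: "b \<ge> 2"
  shows "digsum b n = n mod b + digsum b (n div b)"
proof -
  have "digsum b n = (\<Sum>k\<le>Suc n. (n div b ^ k) mod b)"
    using digsum_ext[OF b, of n "Suc n"] by simp
  also have "\<dots> = n mod b + (\<Sum>j\<le>n. (n div b ^ Suc j) mod b)"
    by (subst sum.atMost_Suc_shift) simp
  also have "(\<Sum>j\<le>n. (n div b ^ Suc j) mod b) = (\<Sum>j\<le>n. ((n div b) div b ^ j) mod b)"
    by (simp add: div_mult2_eq)
  also have "\<dots> = digsum b (n div b)"
    using digsum_ext[OF b, of "n div b" n] by simp
  finally show ?thesis .
qed

lemma digsum_0: "digsum b 0 = 0" by (simp add: digsum_def)

definition U :: "nat \<Rightarrow> nat \<Rightarrow> nat \<Rightarrow> bool" where "U b k m \<longleftrightarrow> m mod b^k = b^k - 1"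
definition T :: "nat \<Rightarrow> nat \<Rightarrow> nat \<Rightarrow> nat \<Rightarrow> bool" where "T b r k n \<longleftrightarrow> b^k - r \<le> n mod b^k"

lemma U_0: "U b 0 m" by (simp add: U_def)

lemma U_Suc:
  assumes b: "b \<ge> 2"
  shows "U b (Suc k) m \<longleftrightarrow> m mod b = b - 1 \<and> U b k (m div b)"
proof -
  define x where "x = (m div b) mod b^k"
  define y where "y = m mod b"
  have P: "b^k \<ge> 1" using b by simp
  have x: "x < b^k" unfolding x_def using b by simp
  have y: "y < b" unfolding y_def using b by simp
  have e: "m mod b^(Suc k) = b*x + y" unfolding x_def y_def by (simp add: mod_mult2_eq)
  have "b*x + y = b*b^k - 1 \<longleftrightarrow> y = b - 1 \<and> x = b^k - 1"
  proof
    assume h: "b*x + y = b*b^k - 1"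
    have "b^Suc k > 0" using b by simp
    then have "b*b^k \<ge> 1" by simp
    have "int (b*x+y) = int (b*b^k - 1)" using h by simp
    then have h': "int b * int x + int y = int b * int (b^k) - 1" using \<open>b*b^k \<ge> 1\<close>
      by (simp add: of_nat_diff)
    show "y = b - 1 \<and> x = b^k - 1"
    proof (cases "x + 1 < b^k")
      case True
      then have "int (x + 1) < int (b^k)" by (simp only: of_nat_less_iff)
      then have "int x + 1 \<le> int (b^k) - 1" by linarith
      then have "int b * (int x + 1) \<le> int b * (int (b^k) - 1)"
        by (intro mult_left_mono) auto
      then have "int b * int x + int b \<le> int b * int (b^k) - int b" by (simp add: algebra_simps)
      then show ?thesis using h' y b by linarith
    next
      case False
      then have "x = b^k - 1" using x by linarith
      then have "int x = int (b^k) - 1" using P by (metis of_nat_1 of_nat_diff)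
      then have "int b * int x = int b * int (b^k) - int b" by (simp only: right_diff_distrib mult_1_right)
      then have "int y = int b - 1" using h' by linarith
      then have "y = b - 1" by linarith
      then show ?thesis using \<open>x = b^k - 1\<close> by simp
    qed
  next
    assume "y = b - 1 \<and> x = b^k - 1"
    then show "b*x + y = b*b^k - 1" using P b by (simp add: algebra_simps diff_mult_distrib2)
  qed
  then show ?thesis unfolding U_def using e by (simp add: x_def y_def)
qed

lemma U_exists:
  assumes b: "b \<ge> 2"
  shows "\<exists>j. U b j m \<and> \<not> U b (Suc j) m"
proof (induction m rule: less_induct)
  case (less m)
  show ?case
  proof (cases "m mod b = b - 1")
    case False
    then show ?thesis using U_Suc[OF b, of 0 m] U_0 by auto
  next
    case True
    then have "m > 0" using b by (cases m) auto
    then have "m div b < m" using b by simp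
    then obtain j where "U b j (m div b) \<and> \<not> U b (Suc j) (m div b)" using less by blast
    then show ?thesis using True U_Suc[OF b] by blast
  qed
qed

lemma inc_lemma:
  assumes b: "b \<ge> 2"
  shows "U b j m \<Longrightarrow> \<not> U b (Suc j) m \<Longrightarrow>
    int (digsum b (Suc m)) = int (digsum b m) + 1 - (int b - 1) * int j"
proof (induction j arbitrary: m)
  case 0
  then have ne: "m mod b \<noteq> b - 1" using U_Suc[OF b, of 0 m] U_0 by auto
  define q where "q = m div b"
  define y where "y = m mod b"
  have m: "m = b*q + y" unfolding q_def y_def by simp
  have "y < b" unfolding y_def using b by simp
  then have "y + 1 < b" using ne unfolding y_def by linarith
  have sm: "Suc m = (y + 1) + b*q" using m by simp
  have "Suc m mod b = y + 1" unfolding sm using \<open>y + 1 < b\<close> by simp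
  have "Suc m div b = q + (y+1) div b" unfolding sm using b div_mult_self2[of b "y+1" q] by simp
  then have "Suc m div b = q" using \<open>y + 1 < b\<close> by simp
  have "digsum b (Suc m) = y + 1 + digsum b q" using digsum_rec[OF b, of "Suc m"]
    \<open>Suc m mod b = y + 1\<close> \<open>Suc m div b = q\<close> by simp
  moreover have "digsum b m = y + digsum b q" using digsum_rec[OF b, of m] q_def y_def by simp
  ultimately show ?case by simp
next
  case (Suc j)
  then have h: "m mod b = b - 1" "U b j (m div b)" "\<not> U b (Suc j) (m div b)"
    using U_Suc[OF b] by auto
  define q where "q = m div b"
  have "m = b*q + (b - 1)" unfolding q_def using h(1) by (metis div_mult_mod_eq mult.commute)
  then have m: "Suc m = b*(q+1)" using b by simp
  then have "Suc m mod b = 0" "Suc m div b = q + 1" using b by auto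
  then have "digsum b (Suc m) = digsum b (Suc q)" using digsum_rec[OF b, of "Suc m"] by simp
  moreover have "digsum b m = (b - 1) + digsum b q" using digsum_rec[OF b, of m] q_def h(1) by simp
  moreover have "int (digsum b (Suc q)) = int (digsum b q) + 1 - (int b - 1) * int j"
    using Suc.IH h q_def by blast
  ultimately show ?case using b by (simp add: algebra_simps of_nat_diff)
qed

lemma T_Suc:
  assumes b: "b \<ge> 2" and r: "r \<le> b - 1"
  shows "T b r (Suc k) n \<longleftrightarrow> T b r 1 n \<and> U b k (n div b)"
proof -
  define x where "x = (n div b) mod b^k"
  define y where "y = n mod b"
  have P: "b^k \<ge> 1" using b by simp
  have x: "x < b^k" unfolding x_def using b by simp
  have y: "y < b" unfolding y_def using b by simp
  have e: "n mod b^(Suc k) = b*x + y" unfolding x_def y_def by (simp add: mod_mult2_eq)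
  have rb: "r \<le> b*b^k" using r P b
    by (metis diff_le_self le_trans mult_le_mono mult.right_neutral)
  have "b*b^k - r \<le> b*x + y \<longleftrightarrow> b - r \<le> y \<and> x = b^k - 1"
  proof -
    have i1: "int (b*b^k - r) = int b * int (b^k) - int r" using rb by (simp add: of_nat_diff)
    have i2: "int (b - r) = int b - int r" using r by (simp add: of_nat_diff)
    show ?thesis
    proof (cases "x + 1 < b^k")
      case True
      then have "int (x + 1) < int (b^k)" by (simp only: of_nat_less_iff)
      then have "int x + 1 \<le> int (b^k) - 1" by linarith
      then have "int b * (int x + 1) \<le> int b * (int (b^k) - 1)"
        by (intro mult_left_mono) auto
      then have "int b * int x + int b \<le> int b * int (b^k) - int b" by (simp add: algebra_simps)
      moreover have "int y < int b" "int r \<le> int b - 1" using y r b by auto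
      ultimately have "int b * int x + int y < int b * int (b^k) - int r" by linarith
      then have "int (b*x + y) < int (b*b^k - r)" using i1 by simp
      then have "\<not> b*b^k - r \<le> b*x + y" by linarith
      moreover have "x \<noteq> b^k - 1" using True by linarith
      ultimately show ?thesis by simp
    next
      case False
      then have "x = b^k - 1" using x by linarith
      then have "int x = int (b^k) - 1" using P by (metis of_nat_1 of_nat_diff)
      then have "int b * int x = int b * int (b^k) - int b" by (simp only: right_diff_distrib mult_1_right)
      note eq = this
      have "(b*b^k - r \<le> b*x + y) = (int (b*b^k - r) \<le> int b * int x + int y)"
        by (metis of_nat_le_iff of_nat_add of_nat_mult)
      also have "\<dots> = (int (b-r) \<le> int y)" unfolding i1 i2 eq by auto
      also have "\<dots> = (b - r \<le> y)" by (simp only: of_nat_le_iff)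
      finally have "b*b^k - r \<le> b*x + y \<longleftrightarrow> b - r \<le> y" .
      then show ?thesis using \<open>x = b^k - 1\<close> by simp
    qed
  qed
  then show ?thesis unfolding T_def U_def using e by (simp add: x_def y_def)
qed

lemma Delta_noT1:
  assumes b: "b \<ge> 2" and r: "r \<le> b - 1" and h: "\<not> T b r 1 n"
  shows "Delta b r n = int r"
proof -
  define q where "q = n div b"
  define y where "y = n mod b"
  have lt: "y + r < b" using h unfolding T_def y_def by simp
  have sm: "n + r = (y + r) + b*q" unfolding q_def y_def by simp
  have "(n + r) mod b = y + r" unfolding sm using lt by simp
  moreover have "(n + r) div b = q + (y+r) div b" unfolding sm using b div_mult_self2[of b "y+r" q] by simp
  then have "(n + r) div b = q" using lt by simp
  ultimately have "digsum b (n+r) = y + r + digsum b q" using digsum_rec[OF b, of "n+r"] by simp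
  moreover have "digsum b n = y + digsum b q" using digsum_rec[OF b, of n] q_def y_def by simp
  ultimately show ?thesis unfolding Delta_def by simp
qed

lemma Delta_T1:
  assumes b: "b \<ge> 2" and r: "r \<le> b - 1" and h: "T b r 1 n"
  shows "Delta b r n = int r - int b + int (digsum b (Suc (n div b))) - int (digsum b (n div b))"
proof -
  define q where "q = n div b"
  define y where "y = n mod b"
  have ge: "b \<le> y + r" using h r unfolding T_def y_def by simp
  have y: "y < b" unfolding y_def using b by simp
  have lt: "y + r - b < b" using y r by linarith
  have sm: "n + r = (y + r - b) + b*(q+1)" unfolding q_def y_def using ge y_def by simp
  have "(n + r) mod b = y + r - b" unfolding sm mod_mult_self2 using lt by simp
  moreover have "(n + r) div b = (q+1) + (y+r-b) div b" unfolding sm using b div_mult_self2[of b "y+r-b" "q+1"] by simp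
  then have "(n + r) div b = q+1" using lt by simp
  ultimately have "digsum b (n+r) = (y + r - b) + digsum b (Suc q)" using digsum_rec[OF b, of "n+r"] by simp
  moreover have "digsum b n = y + digsum b q" using digsum_rec[OF b, of n] q_def y_def by simp
  ultimately show ?thesis unfolding Delta_def q_def using ge by (simp add: of_nat_diff)
qed

definition cls :: "nat \<Rightarrow> nat \<Rightarrow> nat \<Rightarrow> nat \<Rightarrow> bool" where
  "cls b r k n \<longleftrightarrow> (if k = 0 then \<not> T b r 1 n else T b r k n \<and> \<not> T b r (Suc k) n)"

lemma Delta_cls:
  assumes b: "b \<ge> 2" and r: "r \<le> b - 1" and h: "cls b r k n"
  shows "Delta b r n = int r - (int b - 1) * int k"
proof (cases k)
  case 0
  then show ?thesis using h Delta_noT1[OF b r] unfolding cls_def by simp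
next
  case (Suc j)
  then have h1: "T b r (Suc j) n" "\<not> T b r (Suc (Suc j)) n" using h unfolding cls_def by auto
  have t1: "T b r 1 n" and u: "U b j (n div b)" using h1(1) T_Suc[OF b r, of j n] by blast+
  have nu: "\<not> U b (Suc j) (n div b)" using h1(2) t1 T_Suc[OF b r, of "Suc j" n] by blast
  show ?thesis using Delta_T1[OF b r t1] inc_lemma[OF b u nu] Suc by (simp add: algebra_simps)
qed

lemma cls_exists:
  assumes b: "b \<ge> 2" and r: "r \<le> b - 1"
  shows "\<exists>k. cls b r k n"
proof (cases "T b r 1 n")
  case False
  then show ?thesis unfolding cls_def by (intro exI[of _ 0]) simp
next
  case True
  obtain j where j: "U b j (n div b)" "\<not> U b (Suc j) (n div b)" using U_exists[OF b] by blast
  have "T b r (Suc j) n" "\<not> T b r (Suc (Suc j)) n" using True j T_Suc[OF b r, of j n] T_Suc[OF b r, of "Suc j" n] by blast+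
  then show ?thesis unfolding cls_def by (intro exI[of _ "Suc j"]) simp
qed

lemma count_split:
  fixes P :: "nat \<Rightarrow> bool" and m N :: nat
  assumes per: "\<And>n. P (n + m) = P n"
  shows "card {n. n < m + N \<and> P n} = card {n. n < m \<and> P n} + card {n. n < N \<and> P n}"
proof -
  have eq: "{n. n < m + N \<and> P n} = {n. n < m \<and> P n} \<union> (\<lambda>n. n + m) ` {n. n < N \<and> P n}"
  proof (rule set_eqI, rule iffI)
    fix x assume x: "x \<in> {n. n < m + N \<and> P n}"
    show "x \<in> {n. n < m \<and> P n} \<union> (\<lambda>n. n + m) ` {n. n < N \<and> P n}"
    proof (cases "x < m")
      case True then show ?thesis using x by auto
    next
      case False
      then have "x = (x - m) + m" by simp
      moreover have "x - m < N \<and> P (x - m)" using x False per[of "x - m"] by auto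
      ultimately show ?thesis by blast
    qed
  next
    fix x assume "x \<in> {n. n < m \<and> P n} \<union> (\<lambda>n. n + m) ` {n. n < N \<and> P n}"
    then show "x \<in> {n. n < m + N \<and> P n}" using per by auto
  qed
  have "card ({n. n < m \<and> P n} \<union> (\<lambda>n. n + m) ` {n. n < N \<and> P n})
      = card {n. n < m \<and> P n} + card ((\<lambda>n. n + m) ` {n. n < N \<and> P n})"
    by (rule card_Un_disjoint) auto
  also have "card ((\<lambda>n. n + m) ` {n. n < N \<and> P n}) = card {n. n < N \<and> P n}"
    by (rule card_image) (auto simp: inj_on_def)
  finally show ?thesis using eq by simp
qed

lemma count_formula:
  fixes P :: "nat \<Rightarrow> bool" and m q s :: nat
  assumes per: "\<And>n. P (n + m) = P n"
  shows "card {n. n < q * m + s \<and> P n} = q * card {n. n < m \<and> P n} + card {n. n < s \<and> P n}"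
proof (induction q)
  case (Suc q)
  have "card {n. n < Suc q * m + s \<and> P n} = card {n. n < m + (q * m + s) \<and> P n}"
    by (simp add: add.assoc)
  also have "\<dots> = card {n. n < m \<and> P n} + card {n. n < q * m + s \<and> P n}"
    by (rule count_split[where P=P and m=m, OF per])
  finally show ?case using Suc by simp
qed simp

lemma card_le_bound: "card {n. n < s \<and> P n} \<le> s"
proof -
  have "card {n. n < s \<and> P n} \<le> card {..<s}" by (rule card_mono) auto
  then show ?thesis by simp
qed

lemma density:
  fixes P :: "nat \<Rightarrow> bool" and m :: nat
  assumes m: "m > 0" and per: "\<And>n. P (n + m) = P n"
  shows "(\<lambda>N. real (card {n. n < N \<and> P n}) / real N) \<longlonglongrightarrow> real (card {n. n < m \<and> P n}) / real m"
proof -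
  define a where "a = card {n. n < m \<and> P n}"
  have am: "a \<le> m" unfolding a_def using card_le_bound .
  have bound: "\<bar>real (card {n. n < N \<and> P n}) / real N - real a / real m\<bar> \<le> real m / real N"
    if N: "N > 0" for N
  proof -
    define q where "q = N div m"
    define s where "s = N mod m"
    define A where "A = card {n. n < s \<and> P n}"
    have Nq: "N = q * m + s" unfolding q_def s_def by simp
    have cN: "card {n. n < N \<and> P n} = q * a + A"
      unfolding A_def a_def by (subst Nq, rule count_formula[where P=P and m=m, OF per])
    have As: "A \<le> s" unfolding A_def by (rule card_le_bound)
    have sm: "s < m" unfolding s_def using m by simp
    have rN: "real N = real q * real m + real s" using Nq by (metis of_nat_add of_nat_mult)
    have rc: "real (card {n. n < N \<and> P n}) = real q * real a + real A" using cN by simp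
    have key: "real m * real (card {n. n < N \<and> P n}) - real a * real N = real m * real A - real a * real s"
      unfolding rc rN by (simp add: algebra_simps)
    have k1: "0 \<le> real m * real A" "real m * real A \<le> real m * real m"
      using As sm by (auto intro!: mult_left_mono)
    have k2: "0 \<le> real a * real s" "real a * real s \<le> real m * real m"
      using am sm by (auto intro!: mult_mono)
    have "\<bar>real m * real (card {n. n < N \<and> P n}) - real a * real N\<bar> \<le> real m * real m"
      using key k1 k2 by linarith
    moreover have "real (card {n. n < N \<and> P n}) / real N - real a / real m
        = (real m * real (card {n. n < N \<and> P n}) - real a * real N) / (real m * real N)"
      using m N by (simp add: field_simps)
    moreover have D: "real m * real N > 0" using m N by simp
    ultimately have "\<bar>real (card {n. n < N \<and> P n}) / real N - real a / real m\<bar>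
        = \<bar>real m * real (card {n. n < N \<and> P n}) - real a * real N\<bar> / (real m * real N)"
      by (simp add: abs_div)
    also have "\<dots> \<le> real m * real m / (real m * real N)"
      using D \<open>\<bar>real m * real (card {n. n < N \<and> P n}) - real a * real N\<bar> \<le> real m * real m\<close>
      by (intro divide_right_mono) auto
    also have "\<dots> = real m / real N" using m by simp
    finally show ?thesis .
  qed
  have "(\<lambda>N. real (card {n. n < N \<and> P n}) / real N - real a / real m) \<longlonglongrightarrow> 0"
  proof (rule Lim_null_comparison)
    show "\<forall>\<^sub>F N in sequentially. norm (real (card {n. n < N \<and> P n}) / real N - real a / real m) \<le> real m / real N"
      using eventually_gt_at_top[of "0::nat"] by (rule eventually_mono) (use bound in simp)
    show "(\<lambda>N. real m / real N) \<longlonglongrightarrow> 0" by (rule lim_const_over_n)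
  qed
  then show ?thesis unfolding a_def by (rule LIM_zero_cancel)
qed

lemma U_mono:
  assumes b: "b \<ge> 2"
  shows "U b (Suc j) m \<Longrightarrow> U b j m"
proof (induction j arbitrary: m)
  case 0 then show ?case by (simp add: U_0)
next
  case (Suc j)
  then have "m mod b = b - 1" "U b (Suc j) (m div b)" using U_Suc[OF b, of "Suc j" m] by blast+
  then have "U b j (m div b)" using Suc.IH by blast
  then show ?case using \<open>m mod b = b - 1\<close> U_Suc[OF b, of j m] by blast
qed

lemma T_mono:
  assumes b: "b \<ge> 2" and r: "r \<le> b - 1" and h: "T b r (Suc (Suc j)) n"
  shows "T b r (Suc j) n"
proof -
  have "T b r 1 n" "U b (Suc j) (n div b)" using h T_Suc[OF b r, of "Suc j" n] by blast+
  then show ?thesis using U_mono[OF b] T_Suc[OF b r, of j n] by blast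
qed

lemma T_per: "T b r k (n + b^k) = T b r k n"
  unfolding T_def by simp

lemma T_count:
  assumes b: "b \<ge> 2" and r: "r \<le> b - 1" and k: "k \<ge> 1"
  shows "card {n. n < b^k \<and> T b r k n} = r"
proof -
  have "b \<le> b^k" using power_increasing[of 1 k b] b k by simp
  then have rk: "r \<le> b^k" using r by linarith
  have "{n. n < b^k \<and> T b r k n} = {b^k - r..<b^k}" unfolding T_def by auto
  then show ?thesis using rk by simp
qed

lemma dens_T:
  assumes b: "b \<ge> 2" and r: "r \<le> b - 1" and k: "k \<ge> 1"
  shows "(\<lambda>N. real (card {n. n < N \<and> T b r k n}) / real N) \<longlonglongrightarrow> real r / real b ^ k"
  using density[of "b^k" "T b r k", OF _ T_per] b T_count[OF b r k] by simp

lemma dens_C0: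
  assumes b: "b \<ge> 2" and r: "r \<le> b - 1"
  shows "(\<lambda>N. real (card {n. n < N \<and> cls b r 0 n}) / real N) \<longlonglongrightarrow> 1 - real r / real b"
proof -
  have per: "cls b r 0 (n + b) = cls b r 0 n" for n using T_per[of b r 1 n] unfolding cls_def by simp
  have "{n. n < b \<and> cls b r 0 n} = {..<b - r}" unfolding cls_def T_def by auto
  then have c: "card {n. n < b \<and> cls b r 0 n} = b - r" by simp
  have "real (b - r) / real b = 1 - real r / real b" using b r by (simp add: of_nat_diff field_simps)
  then show ?thesis using density[of b "cls b r 0", OF _ per] b c by simp
qed

lemma dens_cls:
  assumes b: "b \<ge> 2" and r: "r \<le> b - 1" and k: "k \<ge> 1"
  shows "(\<lambda>N. real (card {n. n < N \<and> cls b r k n}) / real N) \<longlonglongrightarrow> real r / real b ^ k - real r / real b ^ Suc k"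
proof -
  obtain j where j: "k = Suc j" using k by (cases k) auto
  have sub: "{n. n < N \<and> T b r (Suc k) n} \<subseteq> {n. n < N \<and> T b r k n}" for N
    using T_mono[OF b r] j by auto
  have eq: "{n. n < N \<and> cls b r k n} = {n. n < N \<and> T b r k n} - {n. n < N \<and> T b r (Suc k) n}" for N
    unfolding cls_def using j by auto
  have "real (card {n. n < N \<and> cls b r k n}) / real N =
      real (card {n. n < N \<and> T b r k n}) / real N - real (card {n. n < N \<and> T b r (Suc k) n}) / real N" for N
  proof -
    have "card {n. n < N \<and> cls b r k n} = card {n. n < N \<and> T b r k n} - card {n. n < N \<and> T b r (Suc k) n}"
      unfolding eq by (rule card_Diff_subset) (use sub in auto)
    moreover have "card {n. n < N \<and> T b r (Suc k) n} \<le> card {n. n < N \<and> T b r k n}"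
      by (rule card_mono) (use sub in auto)
    ultimately show ?thesis by (simp add: of_nat_diff diff_divide_distrib)
  qed
  then show ?thesis using tendsto_diff[OF dens_T[OF b r k] dens_T[OF b r, of "Suc k"]] by simp
qed

definition g :: "nat \<Rightarrow> nat \<Rightarrow> nat \<Rightarrow> int" where "g b r k = int r - (int b - 1) * int k"

lemma g_inj: "b \<ge> 2 \<Longrightarrow> inj (g b r)"
  unfolding g_def inj_def by auto

lemma Delta_set:
  assumes b: "b \<ge> 2" and r: "r \<le> b - 1"
  shows "{n. n < N \<and> Delta b r n = g b r k} = {n. n < N \<and> cls b r k n}"
proof -
  have "Delta b r n = g b r k \<longleftrightarrow> cls b r k n" for n
  proof
    assume "cls b r k n" then show "Delta b r n = g b r k" using Delta_cls[OF b r] g_def by simp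
  next
    assume d: "Delta b r n = g b r k"
    obtain j where j: "cls b r j n" using cls_exists[OF b r] by blast
    then have "g b r j = g b r k" using d Delta_cls[OF b r j] g_def by simp
    then have "j = k" using g_inj[OF b] by (auto dest: injD)
    then show "cls b r k n" using j by simp
  qed
  then show ?thesis by auto
qed

lemma mu_g:
  assumes b: "b \<ge> 2" and r: "r \<le> b - 1"
  shows "mu b r (g b r k) = (if k = 0 then 1 - real r / real b else real r / real b ^ k - real r / real b ^ Suc k)"
proof (cases "k = 0")
  case True
  then show ?thesis unfolding mu_def Delta_set[OF b r] using limI[OF dens_C0[OF b r]] by simp
next
  case False
  then have "k \<ge> 1" by simp
  then show ?thesis unfolding mu_def Delta_set[OF b r] using limI[OF dens_cls[OF b r \<open>k \<ge> 1\<close>]] False by simp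
qed

lemma mu_other:
  assumes b: "b \<ge> 2" and r: "r \<le> b - 1" and d: "d \<notin> range (g b r)"
  shows "mu b r d = 0"
proof -
  have e: "{n. n < N \<and> Delta b r n = d} = {}" for N
  proof -
    have "Delta b r n \<noteq> d" for n
    proof -
      obtain j where "cls b r j n" using cls_exists[OF b r] by blast
      then have "Delta b r n = g b r j" using Delta_cls[OF b r] g_def by simp
      then show ?thesis using d by auto
    qed
    then show ?thesis by auto
  qed
  have "(\<lambda>N. real (card {n. n < N \<and> Delta b r n = d}) / real N) = (\<lambda>N. 0)"
    by (rule ext) (simp only: e card.empty of_nat_0 div_0)
  then show ?thesis unfolding mu_def using limI[OF tendsto_const[of "0::real" sequentially]] by simp
qed

lemma geom2_sums:
  fixes x :: real
  assumes "\<bar>x\<bar> < 1"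
  shows "(\<lambda>n. (of_nat (Suc n) * of_nat (Suc (Suc n))) * x ^ n) sums (2 / (1 - x)^3)"
proof -
  have "(\<lambda>n. diffs (\<lambda>n. of_nat (Suc n)) n * x^n) sums (2 / (1 - x)^3)"
  proof (rule termdiffs_sums_strong[where K=1])
    fix z :: real assume "norm z < 1"
    thus "(\<lambda>n. of_nat (Suc n) * z^n) sums (1 / (1 - z)^2)" by (rule geometric_deriv_sums)
  next
    have "x \<noteq> 1" using assms by auto
    then show "((\<lambda>z. 1 / (1 - z)^2) has_field_derivative 2 / (1 - x)^3) (at x)"
    proof -
      have nz: "1 - x \<noteq> 0" using \<open>x \<noteq> 1\<close> by simp
      have d1: "((\<lambda>z. 1 - z) has_field_derivative (0 - 1)) (at x)"
        by (rule DERIV_diff[OF DERIV_const DERIV_ident])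
      have d2: "((\<lambda>z. (1 - z)^2) has_field_derivative of_nat 2 * ((0 - 1) * (1 - x) ^ (2 - Suc 0))) (at x)"
        by (rule DERIV_power[OF d1])
      have "((\<lambda>z. 1 / (1 - z)^2) has_field_derivative
          (0 * (1 - x)^2 - 1 * (of_nat 2 * ((0 - 1) * (1 - x) ^ (2 - Suc 0)))) / ((1 - x)^2 * (1 - x)^2)) (at x)"
        by (rule DERIV_divide[OF DERIV_const d2]) (use nz in simp)
      moreover have "(0 * (1 - x)^2 - 1 * (of_nat 2 * ((0 - 1) * (1 - x) ^ (2 - Suc 0)))) / ((1 - x)^2 * (1 - x)^2) = 2 / (1 - x)^3"
      proof -
        have "\<And>y::real. y \<noteq> 0 \<Longrightarrow> (0 * y^2 - 1 * (of_nat 2 * ((0 - 1) * y ^ (2 - Suc 0)))) / (y^2 * y^2) = 2 / y^3"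
          by (simp add: power2_eq_square power3_eq_cube field_simps)
        from this[OF nz] show ?thesis .
      qed
      ultimately show ?thesis by simp
    qed
  qed (use assms in auto)
  thus ?thesis unfolding diffs_def by (simp add: mult_ac)
qed

lemma aux1: "(d::real) > 0 \<Longrightarrow> e > 0 \<Longrightarrow> r * d / e^2 * (1 / (d/e)^2) = r / d"
  by (simp add: power_divide field_simps power2_eq_square)
lemma aux3: "(d::real) > 0 \<Longrightarrow> r^2 * 1 + (- 2 * r * d) * (r / d) + d^2 * (r * (d + 1 + 1) / d^2) = r * (1 + (d+1) - r)"
  by (simp add: field_simps power2_eq_square)

lemma aux2: "(d::real) > 0 \<Longrightarrow> e > 0 \<Longrightarrow> 2*e - d = e + 1 \<Longrightarrow> r * d / e^2 * (2 / (d/e)^3 - 1 / (d/e)^2) = r * (e + 1) / d^2"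
proof -
  assume d: "d > 0" and e: "e > 0" and h: "2*e - d = e + 1"
  have "r * d / e^2 * (2 / (d/e)^3 - 1 / (d/e)^2) = r * (2*e - d) / d^2"
    using d e by (simp add: power_divide field_simps power2_eq_square power3_eq_cube)
  then show ?thesis using h by simp
qed

lemma series:
  assumes b: "b \<ge> 2" and r: "r \<le> b - 1"
  shows "((\<lambda>k. mu b r (g b r k)) has_sum 1) UNIV"
    and "((\<lambda>k. real k * mu b r (g b r k)) has_sum (real r / (real b - 1))) UNIV"
    and "((\<lambda>k. (real k)^2 * mu b r (g b r k)) has_sum (real r * (real b + 1) / (real b - 1)^2)) UNIV"
proof -
  define p where "p = (\<lambda>k. mu b r (g b r k))"
  define x :: real where "x = 1 / real b"
  define c :: real where "c = real r * (real b - 1) / (real b)^2"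
  have bpos: "real b > 1" using b by simp
  have x: "\<bar>x\<bar> < 1" "norm x < 1" using bpos unfolding x_def by auto
  have x1: "1 - x = (real b - 1) / real b" unfolding x_def using bpos by (simp add: field_simps)
  have c0: "c \<ge> 0" unfolding c_def using bpos by simp
  have x0: "x \<ge> 0" unfolding x_def by simp
  have pS: "p (Suc n) = c * x^n" for n
  proof -
    have "p (Suc n) = real r / real b ^ Suc n - real r / real b ^ Suc (Suc n)"
      unfolding p_def using mu_g[OF b r, of "Suc n"] by simp
    also have "\<dots> = c * x^n" unfolding c_def x_def using bpos
      by (simp add: field_simps power_Suc power2_eq_square)
    finally show ?thesis .
  qed
  have p0: "p 0 = 1 - real r / real b" unfolding p_def using mu_g[OF b r, of 0] by simp
  have rb: "real r \<le> real b - 1" using r b by linarith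
  have p0nn: "p 0 \<ge> 0" unfolding p0 using bpos rb by (simp add: field_simps)
  have pnn: "p k \<ge> 0" for k
  proof (cases k)
    case 0 then show ?thesis using p0nn by simp
  next
    case (Suc n) then show ?thesis using pS c0 x0 by simp
  qed
  have "(\<lambda>n. p (Suc n)) sums (c * (1 / (1 - x)))"
    unfolding pS by (rule sums_mult) (rule geometric_sums[OF x(2)])
  then have s0: "p sums (c * (1 / (1 - x)) + p 0)" by (simp add: sums_Suc_iff)
  have v0: "c * (1 / (1 - x)) + p 0 = 1" unfolding p0 x1 c_def using bpos
    by (simp add: field_simps power2_eq_square)
  have "(\<lambda>n. real (Suc n) * p (Suc n)) = (\<lambda>n. c * (of_nat (Suc n) * x^n))"
    unfolding pS by (simp add: mult_ac)
  moreover have "(\<lambda>n. c * (of_nat (Suc n) * x^n)) sums (c * (1 / (1 - x)^2))"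
    by (rule sums_mult) (rule geometric_deriv_sums[OF x(2)])
  ultimately have "(\<lambda>n. real (Suc n) * p (Suc n)) sums (c * (1 / (1 - x)^2))" by simp
  then have s1: "(\<lambda>k. real k * p k) sums (c * (1 / (1 - x)^2))"
    using sums_Suc_iff[of "\<lambda>k. real k * p k"] by simp
  have v1: "c * (1 / (1 - x)^2) = real r / (real b - 1)" unfolding x1 c_def
    using aux1[of "real b - 1" "real b" "real r"] bpos by simp
  have "(\<lambda>n. (real (Suc n))^2 * p (Suc n)) =
      (\<lambda>n. c * ((of_nat (Suc n) * of_nat (Suc (Suc n))) * x ^ n - of_nat (Suc n) * x^n))"
    unfolding pS by (simp add: algebra_simps power2_eq_square)
  moreover have "(\<lambda>n. c * ((of_nat (Suc n) * of_nat (Suc (Suc n))) * x ^ n - of_nat (Suc n) * x^n))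
      sums (c * (2 / (1 - x)^3 - 1 / (1 - x)^2))"
    by (intro sums_mult sums_diff geom2_sums geometric_deriv_sums x)
  ultimately have "(\<lambda>n. (real (Suc n))^2 * p (Suc n)) sums (c * (2 / (1 - x)^3 - 1 / (1 - x)^2))" by simp
  then have s2: "(\<lambda>k. (real k)^2 * p k) sums (c * (2 / (1 - x)^3 - 1 / (1 - x)^2))"
    using sums_Suc_iff[of "\<lambda>k. (real k)^2 * p k"] by simp
  have v2: "c * (2 / (1 - x)^3 - 1 / (1 - x)^2) = real r * (real b + 1) / (real b - 1)^2"
    unfolding x1 c_def using aux2[of "real b - 1" "real b" "real r"] bpos by simp
  show "((\<lambda>k. mu b r (g b r k)) has_sum 1) UNIV"
    using sums_nonneg_imp_has_sum[OF s0 pnn] v0 unfolding p_def by simp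
  show "((\<lambda>k. real k * mu b r (g b r k)) has_sum (real r / (real b - 1))) UNIV"
    using sums_nonneg_imp_has_sum[OF s1] pnn v1 unfolding p_def by simp
  show "((\<lambda>k. (real k)^2 * mu b r (g b r k)) has_sum (real r * (real b + 1) / (real b - 1)^2)) UNIV"
    using sums_nonneg_imp_has_sum[OF s2] pnn v2 unfolding p_def by simp
qed

lemma reindex_mu:
  assumes b: "b \<ge> 2" and r: "r \<le> b - 1"
  shows "(\<Sum>\<^sub>\<infinity>d\<in>(UNIV::int set). F d * mu b r d) = (\<Sum>\<^sub>\<infinity>k\<in>(UNIV::nat set). F (g b r k) * mu b r (g b r k))"
proof -
  have "(\<Sum>\<^sub>\<infinity>d\<in>(UNIV::int set). F d * mu b r d) = (\<Sum>\<^sub>\<infinity>d\<in>range (g b r). F d * mu b r d)"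
    by (rule infsum_cong_neutral) (use mu_other[OF b r] in auto)
  also have "\<dots> = infsum ((\<lambda>d. F d * mu b r d) \<circ> g b r) UNIV"
    by (rule infsum_reindex[OF g_inj[OF b]])
  finally show ?thesis by (simp add: o_def)
qed

theorem mainTheorem11:
  fixes b r :: nat
  assumes "b \<ge> 2" and "r \<le> b - 1"
  shows "mu_var b r = real r * (1 + real b - real r)"
proof -
  note b = assms(1) and r = assms(2)
  have bpos: "real b - 1 > 0" using b by simp
  have gk: "real_of_int (g b r k) = real r - (real b - 1) * real k" for k
    unfolding g_def using b by simp
  note S = series[OF b r]
  have "((\<lambda>k. real r * mu b r (g b r k) + (- (real b - 1)) * (real k * mu b r (g b r k))) has_sum
      (real r * 1 + (- (real b - 1)) * (real r / (real b - 1)))) UNIV"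
    by (intro has_sum_add has_sum_cmult_right S)
  moreover have "real r * 1 + (- (real b - 1)) * (real r / (real b - 1)) = 0" using bpos by (simp add: field_simps)
  moreover have "(\<lambda>k. real r * mu b r (g b r k) + (- (real b - 1)) * (real k * mu b r (g b r k)))
      = (\<lambda>k. real_of_int (g b r k) * mu b r (g b r k))"
    unfolding gk by (simp add: algebra_simps)
  ultimately have "((\<lambda>k. real_of_int (g b r k) * mu b r (g b r k)) has_sum 0) UNIV" by simp
  then have mean: "mu_mean b r = 0"
    unfolding mu_def mu_mean_def using reindex_mu[OF b r, of real_of_int] infsumI by (simp add: mu_def)
  have "((\<lambda>k. (real r)^2 * mu b r (g b r k) + (- 2 * real r * (real b - 1)) * (real k * mu b r (g b r k))
        + (real b - 1)^2 * ((real k)^2 * mu b r (g b r k))) has_sum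
      ((real r)^2 * 1 + (- 2 * real r * (real b - 1)) * (real r / (real b - 1))
        + (real b - 1)^2 * (real r * (real b + 1) / (real b - 1)^2))) UNIV"
    by (intro has_sum_add has_sum_cmult_right S)
  moreover have "(real r)^2 * 1 + (- 2 * real r * (real b - 1)) * (real r / (real b - 1))
        + (real b - 1)^2 * (real r * (real b + 1) / (real b - 1)^2) = real r * (1 + real b - real r)"
    using aux3[of "real b - 1" "real r"] bpos by simp
  moreover have "(\<lambda>k. (real r)^2 * mu b r (g b r k) + (- 2 * real r * (real b - 1)) * (real k * mu b r (g b r k))
        + (real b - 1)^2 * ((real k)^2 * mu b r (g b r k)))
      = (\<lambda>k. (real_of_int (g b r k) - 0)^2 * mu b r (g b r k))"
    unfolding gk by (simp add: algebra_simps power2_eq_square)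
  ultimately have "((\<lambda>k. (real_of_int (g b r k) - 0)^2 * mu b r (g b r k)) has_sum real r * (1 + real b - real r)) UNIV"
    by simp
  then show ?thesis
    unfolding mu_var_def mean using reindex_mu[OF b r, of "\<lambda>d. (real_of_int d - 0)^2"] infsumI by simp
qed

end
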